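(* Let $\mathcal{G}$ be an MVPP optional-grabbing pawn game with pawns $[d]$, let $v\in V$ with $v\in V_j$, let $P\subseteq[d]$, and let $j'\in[d]$ with $j'\neq j$. If Player 1 wins from $\langle v,P\cup\{j'\}\rangle$, then Player 1 wins from $\langle v,P\rangle$. Dually, if Player 2 wins from $\langle v,P\setminus\{j'\}\rangle$, then Player 2 wins from $\langle v,P\rangle$. (In words: when a player has the option to grab after the opponent moves the token to $v$, grabbing a pawn other than the one owning $v$ is never better than not grabbing.)
   Context: A pawn game with $d$ pawns consists of a finite directed graph $(V,E)$, a target set $T\subseteq V$, and sets $V_1,\dots,V_d$ partitioning $V$ (MVPP), where Pawn $j$ owns the vertices in $V_j$. A configuration is $\langle v,P\rangle$: token on $v$, Player 1 controls pawns $P\subseteq[d]$, Player 2 controls the rest. At $\langle v,P\rangle$, Player 1 moves the token along an edge iff he controls the pawn owning $v$; otherwise Player 2 moves. Under optional grabbing, after Player $i$ moves, the other player may either leave pawn control unchanged or take one pawn currently controlled by Player $i$. Player 1 wins a play iff it visits $T$, otherwise Player 2 wins; winning from a configuration means having a strategy that wins against all opponent strategies. *)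

theory Defs
  imports Main
begin

text \<open>Pawns are the numbers 1..d. The partition V_1,...,V_d (MVPP) is given by an
  ownership function own: vertex x belongs to V_(own x).\<close>

definition pawn_game :: "'v set \<Rightarrow> ('v \<times> 'v) set \<Rightarrow> 'v set \<Rightarrow> nat \<Rightarrow> ('v \<Rightarrow> nat) \<Rightarrow> bool" where
  "pawn_game V E T d own \<longleftrightarrow>
     finite V \<and> E \<subseteq> V \<times> V \<and> T \<subseteq> V \<and>
     (\<forall>x\<in>V. own x \<in> {1..d}) \<and>
     (\<forall>x\<in>V. \<exists>y. (x, y) \<in> E)"

datatype player = Pl1 | Pl2

text \<open>Positions of the optional-grabbing game: a configuration \<open>Conf v P\<close> (token on v,
  Player 1 controls pawns P), or an intermediate position \<open>Grab u P i\<close> reached right after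
  player i moved the token to u, where the other player decides whether to grab.\<close>
datatype 'v pos = Conf 'v "nat set" | Grab 'v "nat set" player

fun token :: "'v pos \<Rightarrow> 'v" where
  "token (Conf v P) = v"
| "token (Grab u P i) = u"

fun ctrl :: "('v \<Rightarrow> nat) \<Rightarrow> 'v pos \<Rightarrow> player" where
  "ctrl own (Conf v P) = (if own v \<in> P then Pl1 else Pl2)"
| "ctrl own (Grab u P Pl1) = Pl2"
| "ctrl own (Grab u P Pl2) = Pl1"

fun move :: "('v \<times> 'v) set \<Rightarrow> nat \<Rightarrow> ('v \<Rightarrow> nat) \<Rightarrow> 'v pos \<Rightarrow> 'v pos \<Rightarrow> bool" where
  "move E d own (Conf v P) y =
     (\<exists>u. (v, u) \<in> E \<and> y = Grab u P (if own v \<in> P then Pl1 else Pl2))"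
| "move E d own (Grab u P Pl1) y =
     (y = Conf u P \<or> (\<exists>k\<in>P. y = Conf u (P - {k})))"
| "move E d own (Grab u P Pl2) y =
     (y = Conf u P \<or> (\<exists>k\<in>{1..d} - P. y = Conf u (P \<union> {k})))"

type_synonym 'v strategy = "'v pos list \<Rightarrow> 'v pos"

definition legal_strategy :: "('v \<times> 'v) set \<Rightarrow> nat \<Rightarrow> ('v \<Rightarrow> nat) \<Rightarrow> player \<Rightarrow> 'v strategy \<Rightarrow> bool" where
  "legal_strategy E d own i \<sigma> \<longleftrightarrow>
     (\<forall>h. h \<noteq> [] \<longrightarrow> ctrl own (last h) = i \<longrightarrow>
        (\<exists>y. move E d own (last h) y) \<longrightarrow> move E d own (last h) (\<sigma> h))"

fun hist :: "('v \<Rightarrow> nat) \<Rightarrow> 'v strategy \<Rightarrow> 'v strategy \<Rightarrow> 'v pos \<Rightarrow> nat \<Rightarrow> 'v pos list" where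
  "hist own \<sigma> \<tau> s 0 = [s]"
| "hist own \<sigma> \<tau> s (Suc n) =
     (let h = hist own \<sigma> \<tau> s n in h @ [if ctrl own (last h) = Pl1 then \<sigma> h else \<tau> h])"

definition outcome :: "('v \<Rightarrow> nat) \<Rightarrow> 'v strategy \<Rightarrow> 'v strategy \<Rightarrow> 'v pos \<Rightarrow> nat \<Rightarrow> 'v pos" where
  "outcome own \<sigma> \<tau> s n = last (hist own \<sigma> \<tau> s n)"

definition visits :: "'v set \<Rightarrow> (nat \<Rightarrow> 'v pos) \<Rightarrow> bool" where
  "visits T \<rho> \<longleftrightarrow> (\<exists>n. token (\<rho> n) \<in> T)"

definition wins1 :: "('v \<times> 'v) set \<Rightarrow> 'v set \<Rightarrow> nat \<Rightarrow> ('v \<Rightarrow> nat) \<Rightarrow> 'v pos \<Rightarrow> bool" where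
  "wins1 E T d own s \<longleftrightarrow>
     (\<exists>\<sigma>. legal_strategy E d own Pl1 \<sigma> \<and>
        (\<forall>\<tau>. legal_strategy E d own Pl2 \<tau> \<longrightarrow> visits T (outcome own \<sigma> \<tau> s)))"

definition wins2 :: "('v \<times> 'v) set \<Rightarrow> 'v set \<Rightarrow> nat \<Rightarrow> ('v \<Rightarrow> nat) \<Rightarrow> 'v pos \<Rightarrow> bool" where
  "wins2 E T d own s \<longleftrightarrow>
     (\<exists>\<tau>. legal_strategy E d own Pl2 \<tau> \<and>
        (\<forall>\<sigma>. legal_strategy E d own Pl1 \<sigma> \<longrightarrow> \<not> visits T (outcome own \<sigma> \<tau> s)))"

end

theory Submission
  imports Defs
begin

fun opp :: "player \<Rightarrow> player" where "opp Pl1 = Pl2" | "opp Pl2 = Pl1"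

fun play :: "('p \<Rightarrow> player) \<Rightarrow> (player \<Rightarrow> 'p list \<Rightarrow> 'p) \<Rightarrow> 'p \<Rightarrow> nat \<Rightarrow> 'p list" where
  "play C ST s 0 = [s]"
| "play C ST s (Suc n) = (let h = play C ST s n in h @ [ST (C (last h)) h])"

lemma hist_play: "hist own \<sigma> \<tau> s n = play (ctrl own) (\<lambda>i. if i = Pl1 then \<sigma> else \<tau>) s n"
  by (induction n) (simp_all add: Let_def)

fun trr :: "('p \<Rightarrow> player) \<Rightarrow> ('p \<Rightarrow> 'p \<Rightarrow> 'p \<Rightarrow> 'p) \<Rightarrow> player \<Rightarrow> ('p list \<Rightarrow> 'p) \<Rightarrow> 'p \<Rightarrow> 'p list \<Rightarrow> 'p list" where
  "trr C G p a s0 [] = []"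
| "trr C G p a s0 [s] = [s0]"
| "trr C G p a s0 (t # s # rest) = (let h' = trr C G p a s0 (s # rest) in h' @ [if C s = p then a h' else G s (last h') t])"

lemma trr_len: "length (trr C G p a s0 l) = length l"
  by (induction C G p a s0 l rule: trr.induct) (simp_all add: Let_def)

definition legal :: "('p \<Rightarrow> 'p \<Rightarrow> bool) \<Rightarrow> ('p \<Rightarrow> player) \<Rightarrow> player \<Rightarrow> ('p list \<Rightarrow> 'p) \<Rightarrow> bool" where
  "legal M C i \<sigma> \<longleftrightarrow> (\<forall>h. h \<noteq> [] \<longrightarrow> C (last h) = i \<longrightarrow> (\<exists>y. M (last h) y) \<longrightarrow> M (last h) (\<sigma> h))"

lemma legal_strategy_eq: "legal_strategy E d own i \<sigma> = legal (move E d own) (ctrl own) i \<sigma>"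
  unfolding legal_strategy_def legal_def by simp

lemma opp_neq: "opp p \<noteq> p" by (cases p) auto
lemma neq_opp: "(c::player) \<noteq> p \<Longrightarrow> c = opp p" by (cases p; cases c) auto

lemma sim:
  fixes R :: "'p \<Rightarrow> 'p \<Rightarrow> bool"
  assumes R0: "R s0 s0'"
  and Rc: "\<And>s s'. R s s' \<Longrightarrow> tok s = tok s' \<and> C s = C s'"
  and Rm: "\<And>s s'. R s s' \<Longrightarrow> (\<exists>y. M s y) \<and> (\<exists>y. M s' y)"
  and fwd: "\<And>s s' t'. R s s' \<Longrightarrow> C s = p \<Longrightarrow> M s' t' \<Longrightarrow> \<exists>t. M s t \<and> R t t'"
  and bwd: "\<And>s s' t. R s s' \<Longrightarrow> C s \<noteq> p \<Longrightarrow> M s t \<Longrightarrow> \<exists>t'. M s' t' \<and> R t t'"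
  and la: "legal M C p a'"
  and wa: "\<And>b'. legal M C (opp p) b' \<Longrightarrow> Q (\<lambda>n. tok (last (play C (\<lambda>i. if i = p then a' else b') s0' n)))"
  shows "\<exists>a. legal M C p a \<and> (\<forall>b. legal M C (opp p) b \<longrightarrow> Q (\<lambda>n. tok (last (play C (\<lambda>i. if i = p then a else b) s0 n))))"
proof -
  define F where "F s t' = (SOME t. M s t \<and> R t t')" for s t'
  define G where "G s s' t = (SOME t'. M s' t' \<and> R t t')" for s s' t :: 'p
  define tr where "tr h = trr C G p a' s0' (rev h)" for h
  define a where "a h = (let h' = tr h in if R (last h) (last h') \<and> M (last h') (a' h') then F (last h) (a' h') else (SOME y. M (last h) y))" for h
  have Fp: "M s (F s t') \<and> R (F s t') t'" if "R s s'" "C s = p" "M s' t'" for s s' t'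
    unfolding F_def by (rule someI_ex) (rule fwd[OF that])
  have Gp: "M s' (G s s' t) \<and> R t (G s s' t)" if "R s s'" "C s \<noteq> p" "M s t" for s s' t
    unfolding G_def by (rule someI_ex) (rule bwd[OF that])
  have la2: "legal M C p a"
    unfolding legal_def
  proof (intro allI impI)
    fix h assume h: "h \<noteq> []" "C (last h) = p" "\<exists>y. M (last h) y"
    show "M (last h) (a h)"
    proof (cases "R (last h) (last (tr h)) \<and> M (last (tr h)) (a' (tr h))")
      case True
      then show ?thesis using Fp[of "last h" "last (tr h)" "a' (tr h)"] h unfolding a_def Let_def by auto
    next
      case False
      then show ?thesis using h unfolding a_def Let_def by (auto intro: someI_ex)
    qed
  qed
  have trlen: "length (tr h) = length h" for h unfolding tr_def by (simp add: trr_len)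
  have tr1: "tr [s] = [s0']" for s unfolding tr_def by simp
  have trsnoc: "tr (h @ [x]) = tr h @ [if C (last h) = p then a' (tr h) else G (last h) (last (tr h)) x]"
    if hne: "h \<noteq> []" for h x
  proof -
    obtain s rest where r: "rev h = s # rest" using hne by (cases "rev h") auto
    have "last h = s" using r by (metis last_rev list.sel(1) rev_rev_ident)
    then show ?thesis unfolding tr_def using r by (simp add: Let_def)
  qed
  show ?thesis
  proof (intro exI conjI allI impI)
    show "legal M C p a" by (rule la2)
    fix b assume lb: "legal M C (opp p) b"
    define ST where "ST = (\<lambda>i. if i = p then a else b)"
    define H where "H n = play C ST s0 n" for n
    define b' where "b' h' = (if h' = tr (H (length h' - 1)) then last (tr (H (length h'))) else (SOME y. M (last h') y))" for h'
    define ST' where "ST' = (\<lambda>i. if i = p then a' else b')"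
    have lenH: "length (H n) = Suc n" for n by (induction n) (simp_all add: H_def Let_def)
    have Hne: "H n \<noteq> []" for n using lenH[of n] by auto
    have HS: "H (Suc n) = H n @ [ST (C (last (H n))) (H n)]" for n by (simp add: H_def Let_def)
    have inv: "play C ST' s0' n = tr (H n) \<and> R (last (H n)) (last (tr (H n)))" for n
    proof (induction n)
      case 0
      then show ?case using R0 by (simp add: H_def tr1)
    next
      case (Suc n)
      define s where "s = last (H n)"
      define s' where "s' = last (tr (H n))"
      have IH1: "play C ST' s0' n = tr (H n)" and IH2: "R s s'" using Suc s_def s'_def by auto
      have P: "play C ST' s0' (Suc n) = tr (H n) @ [ST' (C s') (tr (H n))]"
        using IH1 s'_def by (simp add: Let_def)
      have cc: "C s = C s'" using Rc[OF IH2] by simp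
      have trne: "tr (H n) \<noteq> []" using trlen[of "H n"] Hne[of n] by auto
      show ?case
      proof (cases "C s = p")
        case True
        have m: "M s' (a' (tr (H n)))" using la True cc trne Rm[OF IH2] unfolding legal_def s'_def by auto
        have Ha: "H (Suc n) = H n @ [F s (a' (tr (H n)))]"
          using HS[of n] True IH2 m unfolding ST_def a_def Let_def s_def s'_def by simp
        have T: "tr (H (Suc n)) = tr (H n) @ [a' (tr (H n))]"
          using trsnoc[OF Hne[of n]] True Ha s_def by simp
        show ?thesis using P T Ha True cc Fp[OF IH2 True m] unfolding ST'_def by simp
      next
        case False
        have Hb: "H (Suc n) = H n @ [b (H n)]" using HS[of n] False unfolding ST_def s_def by simp
        have mb: "M s (b (H n))" using lb neq_opp[OF False] Rm[OF IH2] Hne[of n] unfolding legal_def s_def by auto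
        have T: "tr (H (Suc n)) = tr (H n) @ [G s s' (b (H n))]"
          using trsnoc[OF Hne[of n]] False Hb s_def s'_def by simp
        have b'eq: "b' (tr (H n)) = G s s' (b (H n))"
          unfolding b'_def using trlen[of "H n"] lenH[of n] T by simp
        show ?thesis using P T Hb False cc b'eq Gp[OF IH2 False mb] unfolding ST'_def by simp
      qed
    qed
    have lb': "legal M C (opp p) b'"
      unfolding legal_def
    proof (intro allI impI)
      fix h' assume h': "h' \<noteq> []" "C (last h') = opp p" "\<exists>y. M (last h') y"
      show "M (last h') (b' h')"
      proof (cases "h' = tr (H (length h' - 1))")
        case True
        define n where "n = length h' - 1"
        have ln: "length h' = Suc n" using h' n_def by (cases h') auto
        define s where "s = last (H n)"
        define s' where "s' = last (tr (H n))"
        have R: "R s s'" using inv s_def s'_def by auto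
        have ls: "last h' = s'" using True n_def s'_def by simp
        have np: "C s \<noteq> p" using Rc[OF R] ls h'(2) opp_neq by metis
        have Hb: "H (Suc n) = H n @ [b (H n)]" using HS[of n] np unfolding ST_def s_def by simp
        have mb: "M s (b (H n))" using lb neq_opp[OF np] Rm[OF R] Hne[of n] unfolding legal_def s_def by auto
        have T: "tr (H (Suc n)) = tr (H n) @ [G s s' (b (H n))]"
          using trsnoc[OF Hne[of n]] np Hb s_def s'_def by simp
        have "b' h' = last (tr (H (length h')))" unfolding b'_def by (rule if_P[OF True])
        then have "b' h' = G s s' (b (H n))" using ln T by simp
        then show ?thesis using ls Gp[OF R np mb] by simp
      next
        case False
        then show ?thesis using h' unfolding b'_def by (auto intro: someI_ex)
      qed
    qed
    have "Q (\<lambda>n. tok (last (play C ST' s0' n)))" using wa[OF lb'] unfolding ST'_def .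
    moreover have "(\<lambda>n. tok (last (play C ST' s0' n))) = (\<lambda>n. tok (last (play C ST s0 n)))"
    proof
      fix n
      show "tok (last (play C ST' s0' n)) = tok (last (play C ST s0 n))"
        using inv[of n] Rc[of "last (H n)" "last (tr (H n))"] unfolding H_def by simp
    qed
    ultimately show "Q (\<lambda>n. tok (last (play C (\<lambda>i. if i = p then a else b) s0 n)))" unfolding ST_def by simp
  qed
qed

fun R1 :: "'v set \<Rightarrow> nat \<Rightarrow> ('v \<Rightarrow> nat) \<Rightarrow> 'v pos \<Rightarrow> 'v pos \<Rightarrow> bool" where
  "R1 V d own (Conf u A) (Conf u' S) = (u' = u \<and> u \<in> V \<and> A \<subseteq> {1..d} \<and>
      (S = A \<or> (\<exists>x\<in>{1..d}. x \<notin> A \<and> x \<noteq> own u \<and> S = insert x A)))"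
| "R1 V d own (Grab u A i) (Grab u' S i') = (u' = u \<and> i' = i \<and> u \<in> V \<and> A \<subseteq> {1..d} \<and>
      (S = A \<or> (\<exists>x\<in>{1..d}. x \<notin> A \<and> S = insert x A)))"
| "R1 V d own _ _ = False"

fun R2 :: "'v set \<Rightarrow> nat \<Rightarrow> ('v \<Rightarrow> nat) \<Rightarrow> 'v pos \<Rightarrow> 'v pos \<Rightarrow> bool" where
  "R2 V d own (Conf u A) (Conf u' S) = (u' = u \<and> u \<in> V \<and> A \<subseteq> {1..d} \<and>
      (A = S \<or> (\<exists>x\<in>{1..d}. x \<notin> S \<and> x \<noteq> own u \<and> A = insert x S)))"
| "R2 V d own (Grab u A i) (Grab u' S i') = (u' = u \<and> i' = i \<and> u \<in> V \<and> A \<subseteq> {1..d} \<and>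
      (A = S \<or> (\<exists>x\<in>{1..d}. x \<notin> S \<and> A = insert x S)))"
| "R2 V d own _ _ = False"

lemma has_move:
  assumes "pawn_game V E T d own" "token s \<in> V"
  shows "\<exists>y. move E d own s y"
proof (cases s)
  case (Conf u A)
  then obtain y where "(u, y) \<in> E" using assms unfolding pawn_game_def by auto
  then show ?thesis using Conf by auto
next
  case (Grab u A i)
  then show ?thesis by (cases i) auto
qed


lemma ctrl_Grab[simp]: "ctrl own (Grab u A i) = opp i" by (cases i) auto

lemma R1_c: "R1 V d own s s' \<Longrightarrow> token s = token s' \<and> ctrl own s = ctrl own s'"
  by (cases s; cases s'; cases "ctrl own s") (auto split: if_splits)

lemma R2_c: "R2 V d own s s' \<Longrightarrow> token s = token s' \<and> ctrl own s = ctrl own s'"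
  by (cases s; cases s'; cases "ctrl own s") (auto split: if_splits)

lemma R1_V: "R1 V d own s s' \<Longrightarrow> token s \<in> V \<and> token s' \<in> V"
  by (cases s; cases s') auto

lemma R2_V: "R2 V d own s s' \<Longrightarrow> token s \<in> V \<and> token s' \<in> V"
  by (cases s; cases s') auto

lemma conf_step1:
  assumes g: "pawn_game V E T d own" and R: "R1 V d own (Conf u A) (Conf u S)" and e: "(u, u') \<in> E"
  shows "R1 V d own (Grab u' A (if own u \<in> A then Pl1 else Pl2)) (Grab u' S (if own u \<in> S then Pl1 else Pl2))"
proof -
  have "u' \<in> V" using g e unfolding pawn_game_def by auto
  moreover have "(own u \<in> A) = (own u \<in> S)" using R by auto
  ultimately show ?thesis using R by auto
qed

lemma conf_step2:
  assumes g: "pawn_game V E T d own" and R: "R2 V d own (Conf u A) (Conf u S)" and e: "(u, u') \<in> E"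
  shows "R2 V d own (Grab u' A (if own u \<in> A then Pl1 else Pl2)) (Grab u' S (if own u \<in> S then Pl1 else Pl2))"
proof -
  have "u' \<in> V" using g e unfolding pawn_game_def by auto
  moreover have "(own u \<in> A) = (own u \<in> S)" using R by auto
  ultimately show ?thesis using R by auto
qed

lemma R1_fwd:
  assumes g: "pawn_game V E T d own" and R: "R1 V d own s s'" and c: "ctrl own s = Pl1"
    and m: "move E d own s' t'"
  shows "\<exists>t. move E d own s t \<and> R1 V d own t t'"
proof (cases s)
  case (Conf u A)
  then obtain S where s': "s' = Conf u S" using R by (cases s') auto
  then obtain u' where e: "(u, u') \<in> E" and t': "t' = Grab u' S (if own u \<in> S then Pl1 else Pl2)"
    using m by auto
  have "move E d own s (Grab u' A (if own u \<in> A then Pl1 else Pl2))" using Conf e by auto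
  then show ?thesis using conf_step1[OF g R[unfolded Conf s'] e] t' by blast
next
  case (Grab u A i)
  then have i: "i = Pl2" using c by (cases i) auto
  then obtain S where s': "s' = Grab u S Pl2" and u: "u \<in> V" and A: "A \<subseteq> {1..d}"
    and SA: "S = A \<or> (\<exists>x\<in>{1..d}. x \<notin> A \<and> S = insert x A)"
    using R Grab by (cases s') auto
  have mt: "t' = Conf u S \<or> (\<exists>k\<in>{1..d} - S. t' = Conf u (S \<union> {k}))" using m s' by simp
  show ?thesis
  proof (cases "S = A")
    case True
    then show ?thesis using mt Grab i u A by auto
  next
    case False
    then obtain x where x: "x \<in> {1..d}" "x \<notin> A" "S = insert x A" using SA by blast
    show ?thesis
    proof (cases "t' = Conf u S")
      case True
      show ?thesis
      proof (cases "x = own u")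
        case xo: True
        have "move E d own s (Conf u (A \<union> {x}))" using Grab i x by auto
        moreover have "R1 V d own (Conf u (A \<union> {x})) t'" using True x u A by auto
        ultimately show ?thesis by blast
      next
        case xo: False
        have "move E d own s (Conf u A)" using Grab i by auto
        moreover have "R1 V d own (Conf u A) t'" using True x u A xo by auto
        ultimately show ?thesis by blast
      qed
    next
      case False
      then obtain k where k: "k \<in> {1..d}" "k \<notin> S" and t': "t' = Conf u (S \<union> {k})" using mt by blast
      show ?thesis
      proof (cases "x = own u")
        case xo: True
        have "move E d own s (Conf u (A \<union> {x}))" using Grab i x by auto
        moreover have "R1 V d own (Conf u (A \<union> {x})) t'" using t' k x u A xo
          by (auto intro!: bexI[of _ k])
        ultimately show ?thesis by blast
      next
        case xo: False
        have "move E d own s (Conf u (A \<union> {k}))" using Grab i k x by auto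
        moreover have "R1 V d own (Conf u (A \<union> {k})) t'" using t' k x u A xo
          by (auto intro!: bexI[of _ x])
        ultimately show ?thesis by blast
      qed
    qed
  qed
qed


lemma R1_bwd:
  assumes g: "pawn_game V E T d own" and R: "R1 V d own s s'" and c: "ctrl own s \<noteq> Pl1"
    and m: "move E d own s t"
  shows "\<exists>t'. move E d own s' t' \<and> R1 V d own t t'"
proof (cases s)
  case (Conf u A)
  then obtain S where s': "s' = Conf u S" using R by (cases s') auto
  obtain u' where e: "(u, u') \<in> E" and t: "t = Grab u' A (if own u \<in> A then Pl1 else Pl2)"
    using m Conf by auto
  have "move E d own s' (Grab u' S (if own u \<in> S then Pl1 else Pl2))" using s' e by auto
  then show ?thesis using conf_step1[OF g R[unfolded Conf s'] e] t by blast
next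
  case (Grab u A i)
  then have i: "i = Pl1" using c by (cases i) auto
  then obtain S where s': "s' = Grab u S Pl1" and u: "u \<in> V" and A: "A \<subseteq> {1..d}"
    and SA: "S = A \<or> (\<exists>x\<in>{1..d}. x \<notin> A \<and> S = insert x A)"
    using R Grab by (cases s') auto
  have mt: "t = Conf u A \<or> (\<exists>k\<in>A. t = Conf u (A - {k}))" using m Grab i by simp
  show ?thesis
  proof (cases "S = A")
    case True
    then have "s' = s" using s' Grab i by simp
    moreover have "R1 V d own t t" using mt u A by auto
    ultimately show ?thesis using m by metis
  next
    case False
    then obtain x where x: "x \<in> {1..d}" "x \<notin> A" "S = insert x A" using SA by blast
    show ?thesis
    proof (cases "t = Conf u A")
      case True
      show ?thesis
      proof (cases "x = own u")
        case xo: True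
        have "move E d own s' (Conf u (S - {x}))" using s' x by auto
        moreover have "S - {x} = A" using x by auto
        ultimately show ?thesis using True u A by auto
      next
        case xo: False
        have "move E d own s' (Conf u S)" using s' by auto
        moreover have "R1 V d own t (Conf u S)" using True x u A xo by auto
        ultimately show ?thesis by blast
      qed
    next
      case False
      then obtain k where k: "k \<in> A" and t: "t = Conf u (A - {k})" using mt by blast
      have kd: "k \<in> {1..d}" using k A by auto
      show ?thesis
      proof (cases "x = own u")
        case xo: True
        have "move E d own s' (Conf u (S - {x}))" using s' x by auto
        moreover have "S - {x} = insert k (A - {k})" using x k by auto
        moreover have "R1 V d own t (Conf u (insert k (A - {k})))" using t k kd x u A xo
          by (auto intro!: bexI[of _ k])
        ultimately show ?thesis by metis
      next
        case xo: False
        have "move E d own s' (Conf u (S - {k}))" using s' k x by auto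
        moreover have "S - {k} = insert x (A - {k})" using x k by auto
        moreover have "R1 V d own t (Conf u (insert x (A - {k})))" using t k x u A xo
          by (auto intro!: bexI[of _ x])
        ultimately show ?thesis by metis
      qed
    qed
  qed
qed

lemma R2_fwd:
  assumes g: "pawn_game V E T d own" and R: "R2 V d own s s'" and c: "ctrl own s = Pl2"
    and m: "move E d own s' t'"
  shows "\<exists>t. move E d own s t \<and> R2 V d own t t'"
proof (cases s)
  case (Conf u A)
  then obtain S where s': "s' = Conf u S" using R by (cases s') auto
  then obtain u' where e: "(u, u') \<in> E" and t': "t' = Grab u' S (if own u \<in> S then Pl1 else Pl2)"
    using m by auto
  have "move E d own s (Grab u' A (if own u \<in> A then Pl1 else Pl2))" using Conf e by auto
  then show ?thesis using conf_step2[OF g R[unfolded Conf s'] e] t' by blast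
next
  case (Grab u A i)
  then have i: "i = Pl1" using c by (cases i) auto
  then obtain S where s': "s' = Grab u S Pl1" and u: "u \<in> V" and A: "A \<subseteq> {1..d}"
    and SA: "A = S \<or> (\<exists>x\<in>{1..d}. x \<notin> S \<and> A = insert x S)"
    using R Grab by (cases s') auto
  have mt: "t' = Conf u S \<or> (\<exists>k\<in>S. t' = Conf u (S - {k}))" using m s' by simp
  show ?thesis
  proof (cases "A = S")
    case True
    then have "s' = s" using s' Grab i by simp
    moreover have "R2 V d own t' t'" using mt u A True by auto
    ultimately show ?thesis using m by metis
  next
    case False
    then obtain x where x: "x \<in> {1..d}" "x \<notin> S" "A = insert x S" using SA by blast
    show ?thesis
    proof (cases "t' = Conf u S")
      case True
      show ?thesis
      proof (cases "x = own u")
        case xo: True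
        have "move E d own s (Conf u (A - {x}))" using Grab i x by auto
        moreover have "A - {x} = S" using x by auto
        ultimately show ?thesis using True u A x by auto
      next
        case xo: False
        have "move E d own s (Conf u A)" using Grab i by auto
        moreover have "R2 V d own (Conf u A) t'" using True x u A xo by auto
        ultimately show ?thesis by blast
      qed
    next
      case False
      then obtain k where k: "k \<in> S" and t': "t' = Conf u (S - {k})" using mt by blast
      have kd: "k \<in> {1..d}" using k A x by auto
      show ?thesis
      proof (cases "x = own u")
        case xo: True
        have "move E d own s (Conf u (A - {x}))" using Grab i x by auto
        moreover have "A - {x} = insert k (S - {k})" using x k by auto
        moreover have "R2 V d own (Conf u (insert k (S - {k}))) t'" using t' k kd x u A xo
          by (auto intro!: bexI[of _ k])
        ultimately show ?thesis by metis
      next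
        case xo: False
        have "move E d own s (Conf u (A - {k}))" using Grab i k x by auto
        moreover have "A - {k} = insert x (S - {k})" using x k by auto
        moreover have "R2 V d own (Conf u (insert x (S - {k}))) t'" using t' k x u A xo
          by (auto intro!: bexI[of _ x])
        ultimately show ?thesis by metis
      qed
    qed
  qed
qed

lemma R2_bwd:
  assumes g: "pawn_game V E T d own" and R: "R2 V d own s s'" and c: "ctrl own s \<noteq> Pl2"
    and m: "move E d own s t"
  shows "\<exists>t'. move E d own s' t' \<and> R2 V d own t t'"
proof (cases s)
  case (Conf u A)
  then obtain S where s': "s' = Conf u S" using R by (cases s') auto
  obtain u' where e: "(u, u') \<in> E" and t: "t = Grab u' A (if own u \<in> A then Pl1 else Pl2)"
    using m Conf by auto
  have "move E d own s' (Grab u' S (if own u \<in> S then Pl1 else Pl2))" using s' e by auto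
  then show ?thesis using conf_step2[OF g R[unfolded Conf s'] e] t by blast
next
  case (Grab u A i)
  then have i: "i = Pl2" using c by (cases i) auto
  then obtain S where s': "s' = Grab u S Pl2" and u: "u \<in> V" and A: "A \<subseteq> {1..d}"
    and SA: "A = S \<or> (\<exists>x\<in>{1..d}. x \<notin> S \<and> A = insert x S)"
    using R Grab by (cases s') auto
  have mt: "t = Conf u A \<or> (\<exists>k\<in>{1..d} - A. t = Conf u (A \<union> {k}))" using m Grab i by simp
  show ?thesis
  proof (cases "A = S")
    case True
    then show ?thesis using mt s' u A by auto
  next
    case False
    then obtain x where x: "x \<in> {1..d}" "x \<notin> S" "A = insert x S" using SA by blast
    show ?thesis
    proof (cases "t = Conf u A")
      case True
      show ?thesis
      proof (cases "x = own u")
        case xo: True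
        have "move E d own s' (Conf u (S \<union> {x}))" using s' x by auto
        moreover have "S \<union> {x} = A" using x by auto
        ultimately show ?thesis using True u A by auto
      next
        case xo: False
        have "move E d own s' (Conf u S)" using s' by auto
        moreover have "R2 V d own t (Conf u S)" using True x u A xo by auto
        ultimately show ?thesis by blast
      qed
    next
      case False
      then obtain k where k: "k \<in> {1..d}" "k \<notin> A" and t: "t = Conf u (A \<union> {k})" using mt by blast
      show ?thesis
      proof (cases "x = own u")
        case xo: True
        have "move E d own s' (Conf u (S \<union> {x}))" using s' x by auto
        moreover have "S \<union> {x} = A" using x by auto
        moreover have "R2 V d own t (Conf u A)" using t k x u A xo
          by (auto intro!: bexI[of _ k])
        ultimately show ?thesis by metis
      next
        case xo: False
        have "move E d own s' (Conf u (S \<union> {k}))" using s' k x by auto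
        moreover have "R2 V d own t (Conf u (S \<union> {k}))" using t k x u A xo
          by (auto intro!: bexI[of _ x])
        ultimately show ?thesis by metis
      qed
    qed
  qed
qed


lemma swap_strat: "(\<lambda>i. if i = Pl2 then \<tau> else \<sigma>) = (\<lambda>i. if i = Pl1 then \<sigma> else \<tau>)"
  by (rule ext) (case_tac i, auto)

theorem corollary6:
  fixes V :: "'v set" and E :: "('v \<times> 'v) set" and T :: "'v set"
    and d :: nat and own :: "'v \<Rightarrow> nat" and v :: 'v and P :: "nat set" and j' :: nat
  assumes "pawn_game V E T d own"
    and "v \<in> V"
    and "P \<subseteq> {1..d}"
    and "j' \<in> {1..d}"
    and "j' \<noteq> own v"
  shows "(wins1 E T d own (Conf v (P \<union> {j'})) \<longrightarrow> wins1 E T d own (Conf v P))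
       \<and> (wins2 E T d own (Conf v (P - {j'})) \<longrightarrow> wins2 E T d own (Conf v P))"
proof (intro conjI impI)
  note g = assms(1)
  assume "wins1 E T d own (Conf v (P \<union> {j'}))"
  then obtain a' where la: "legal (move E d own) (ctrl own) Pl1 a'"
    and wa: "\<And>b'. legal (move E d own) (ctrl own) (opp Pl1) b' \<Longrightarrow>
      (\<lambda>\<rho>. \<exists>n. \<rho> n \<in> T) (\<lambda>n. token (last (play (ctrl own) (\<lambda>i. if i = Pl1 then a' else b') (Conf v (P \<union> {j'})) n)))"
    unfolding wins1_def legal_strategy_eq visits_def outcome_def hist_play by auto
  have R0: "R1 V d own (Conf v P) (Conf v (P \<union> {j'}))"
    using assms(2-5) by (cases "j' \<in> P") (auto simp: insert_absorb intro!: bexI[of _ j'])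
  have "\<exists>a. legal (move E d own) (ctrl own) Pl1 a \<and> (\<forall>b. legal (move E d own) (ctrl own) (opp Pl1) b \<longrightarrow>
      (\<lambda>\<rho>. \<exists>n. \<rho> n \<in> T) (\<lambda>n. token (last (play (ctrl own) (\<lambda>i. if i = Pl1 then a else b) (Conf v P) n))))"
    apply (rule sim[where R="R1 V d own" and M="move E d own" and C="ctrl own" and tok=token
        and p=Pl1 and Q="\<lambda>\<rho>. \<exists>n. \<rho> n \<in> T" and s0'="Conf v (P \<union> {j'})" and a'=a'])
    apply (rule R0)
    using R1_c apply blast
    using R1_V has_move[OF g] apply blast
    using R1_fwd[OF g] apply blast
    using R1_bwd[OF g] apply blast
    using la apply assumption
    using wa by blast
  then show "wins1 E T d own (Conf v P)"
    unfolding wins1_def legal_strategy_eq visits_def outcome_def hist_play by simp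
next
  note g = assms(1)
  assume "wins2 E T d own (Conf v (P - {j'}))"
  then obtain a' where la: "legal (move E d own) (ctrl own) Pl2 a'"
    and wa: "\<And>b'. legal (move E d own) (ctrl own) (opp Pl2) b' \<Longrightarrow>
      (\<lambda>\<rho>. \<not> (\<exists>n. \<rho> n \<in> T)) (\<lambda>n. token (last (play (ctrl own) (\<lambda>i. if i = Pl2 then a' else b') (Conf v (P - {j'})) n)))"
    unfolding wins2_def legal_strategy_eq visits_def outcome_def hist_play swap_strat by auto
  have R0: "R2 V d own (Conf v P) (Conf v (P - {j'}))"
    using assms(2-5) by (cases "j' \<in> P") (auto simp: insert_absorb intro!: bexI[of _ j'])
  have "\<exists>a. legal (move E d own) (ctrl own) Pl2 a \<and> (\<forall>b. legal (move E d own) (ctrl own) (opp Pl2) b \<longrightarrow>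
      (\<lambda>\<rho>. \<not> (\<exists>n. \<rho> n \<in> T)) (\<lambda>n. token (last (play (ctrl own) (\<lambda>i. if i = Pl2 then a else b) (Conf v P) n))))"
    apply (rule sim[where R="R2 V d own" and M="move E d own" and C="ctrl own" and tok=token
        and p=Pl2 and Q="\<lambda>\<rho>. \<not> (\<exists>n. \<rho> n \<in> T)" and s0'="Conf v (P - {j'})" and a'=a'])
    apply (rule R0)
    using R2_c apply blast
    using R2_V has_move[OF g] apply blast
    using R2_fwd[OF g] apply blast
    using R2_bwd[OF g] apply blast
    using la apply assumption
    using wa by blast
  then show "wins2 E T d own (Conf v P)"
    unfolding wins2_def legal_strategy_eq visits_def outcome_def hist_play swap_strat by simp
qed

end
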